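(* Fix an integer $L\ge1$ and $\alpha>0$, and let $N_{RF}\ge1$ be any number of RF chains. For the IT-SU interleaved training scheme with $N_t$ beams, $L$ channel paths, $N_{RF}$ RF chains and threshold $\alpha$ described in the context, the average training length satisfies, as $N_t\to\infty$, $$T_{\text{IT-SU}}=\frac{N_t}{L+1}+\mathcal O(1),$$ where $\mathcal O(1)$ denotes a quantity bounded as $N_t\to\infty$ (with $L,\alpha$ fixed).
   Context: Channel model: for integers $N_t\ge L$, a random subset $\mathcal I\subset\{1,\dots,N_t\}$ with $|\mathcal I|=L$ is drawn uniformly among all $L$-element subsets; conditionally on $\mathcal I$, the coefficients $\bar h_i$, $i\in\mathcal I$, are i.i.d. circularly symmetric complex Gaussian $\mathcal{CN}(0,1/L)$, and $\bar h_i=0$ for $i\notin\mathcal I$. IT-SU scheme (with $N_{RF}\ge1$ RF chains and threshold $\alpha>0$): for $i=1,2,\dots,N_t$ in order, beam $i$ is trained, i.e. $\bar h_i$ becomes known. After step $i$, let $\mathcal B_i=\{l\le i:\bar h_l\neq 0\}$, $L_{B_i}=\min(N_{RF},|\mathcal B_i|)$, and let $\mathcal S_i\subset\mathcal B_i$ be the indices of the $L_{B_i}$ elements of $\mathcal B_i$ with largest $|\bar h_l|$. The training terminates at step $i$ if $\bar h_i\ne 0$ and $\sum_{l\in\mathcal S_i}|\bar h_l|^2>\alpha/N_t$; otherwise it proceeds to step $i+1$. The training length $T$ is the step at which the training terminates, and $T=N_t$ if it never terminates. The average training length is $T_{\text{IT-SU}}=\mathrm E[T]$. *)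

theory Defs
  imports "HOL-Probability.Probability" "HOL-Library.Landau_Symbols"
begin

definition cgauss :: "real \<Rightarrow> complex measure" where
  "cgauss s2 = density lborel (\<lambda>z. ennreal (exp (- (cmod z)\<^sup>2 / s2) / (pi * s2)))"

definition top_sum :: "nat \<Rightarrow> (nat \<Rightarrow> real) \<Rightarrow> nat set \<Rightarrow> real" where
  "top_sum k f B = Max {sum f S | S. S \<subseteq> B \<and> card S = k}"

definition beams_nz :: "(nat \<Rightarrow> complex) \<Rightarrow> nat \<Rightarrow> nat set" where
  "beams_nz h i = {l \<in> {1..i}. h l \<noteq> 0}"

definition itsu_stop :: "nat \<Rightarrow> real \<Rightarrow> nat \<Rightarrow> (nat \<Rightarrow> complex) \<Rightarrow> nat \<Rightarrow> bool" where
  "itsu_stop NRF \<alpha> Nt h i \<longleftrightarrow>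
     i \<in> {1..Nt} \<and> h i \<noteq> 0 \<and>
     top_sum (min NRF (card (beams_nz h i))) (\<lambda>l. (cmod (h l))\<^sup>2) (beams_nz h i) > \<alpha> / real Nt"

definition itsu_length :: "nat \<Rightarrow> real \<Rightarrow> nat \<Rightarrow> (nat \<Rightarrow> complex) \<Rightarrow> nat" where
  "itsu_length NRF \<alpha> Nt h =
     (if \<exists>i. itsu_stop NRF \<alpha> Nt h i then (LEAST i. itsu_stop NRF \<alpha> Nt h i) else Nt)"

text \<open>Channel model: a uniformly random L-subset I of {1..Nt} and, independently,
  i.i.d. CN(0,1/L) values g_i for all i in {1..Nt}; the channel is
  h_i = g_i for i in I and 0 otherwise (same law as in the paper).\<close>
definition channel_space :: "nat \<Rightarrow> nat \<Rightarrow> (nat set \<times> (nat \<Rightarrow> complex)) measure" where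
  "channel_space L Nt =
     measure_pmf (pmf_of_set {I. I \<subseteq> {1..Nt} \<and> card I = L})
       \<Otimes>\<^sub>M PiM {1..Nt} (\<lambda>_. cgauss (1 / real L))"

definition channel_of :: "nat set \<times> (nat \<Rightarrow> complex) \<Rightarrow> nat \<Rightarrow> complex" where
  "channel_of \<omega> i = (if i \<in> fst \<omega> then snd \<omega> i else 0)"

definition avg_itsu_length :: "nat \<Rightarrow> nat \<Rightarrow> real \<Rightarrow> nat \<Rightarrow> real" where
  "avg_itsu_length L NRF \<alpha> Nt =
     (\<integral>\<omega>. real (itsu_length NRF \<alpha> Nt (channel_of \<omega>)) \<partial>channel_space L Nt)"

end

theory Submission
  imports Defs
begin

lemma top_sum_gt:
  assumes "finite B" "k \<le> card B"
  shows "top_sum k f B > c \<longleftrightarrow> (\<exists>S\<in>Pow B. card S = k \<and> sum f S > c)"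
proof -
  let ?F = "{sum f S | S. S \<subseteq> B \<and> card S = k}"
  have fin: "finite ?F"
  proof -
    have "?F \<subseteq> (\<lambda>S. sum f S) ` Pow B" by auto
    thus ?thesis using assms(1) finite_subset by blast
  qed
  obtain S where "S \<subseteq> B" "card S = k" using obtain_subset_with_card_n[OF assms(2)] by metis
  hence ne: "?F \<noteq> {}" by auto
  show ?thesis unfolding top_sum_def using Max_gr_iff[OF fin ne] by auto
qed

lemma itsu_stop_alt:
  "itsu_stop NRF \<alpha> Nt h i \<longleftrightarrow> i \<in> {1..Nt} \<and> h i \<noteq> 0 \<and>
    (\<exists>B\<in>Pow {1..i}. (\<forall>l\<in>{1..i}. h l \<noteq> 0 \<longleftrightarrow> l \<in> B) \<and>
       (\<exists>S\<in>Pow B. card S = min NRF (card B) \<and> sum (\<lambda>l. (cmod (h l))\<^sup>2) S > \<alpha> / real Nt))"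
proof -
  have fB: "finite (beams_nz h i)" "beams_nz h i \<subseteq> {1..i}" unfolding beams_nz_def by auto
  have eq: "(\<forall>l\<in>{1..i}. h l \<noteq> 0 \<longleftrightarrow> l \<in> B) \<longleftrightarrow> B = beams_nz h i" if "B \<subseteq> {1..i}" for B
    using that unfolding beams_nz_def by auto
  show ?thesis unfolding itsu_stop_def
  proof (intro iffI)
    assume A: "i \<in> {1..Nt} \<and> h i \<noteq> 0 \<and> top_sum (min NRF (card (beams_nz h i))) (\<lambda>l. (cmod (h l))\<^sup>2) (beams_nz h i) > \<alpha> / real Nt"
    show "i \<in> {1..Nt} \<and> h i \<noteq> 0 \<and>
    (\<exists>B\<in>Pow {1..i}. (\<forall>l\<in>{1..i}. h l \<noteq> 0 \<longleftrightarrow> l \<in> B) \<and>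
       (\<exists>S\<in>Pow B. card S = min NRF (card B) \<and> sum (\<lambda>l. (cmod (h l))\<^sup>2) S > \<alpha> / real Nt))"
    proof -
      have 1: "beams_nz h i \<in> Pow {1..i}" using fB by simp
      have 2: "\<forall>l\<in>{1..i}. h l \<noteq> 0 \<longleftrightarrow> l \<in> beams_nz h i" unfolding beams_nz_def by simp
      have 3: "\<exists>S\<in>Pow (beams_nz h i). card S = min NRF (card (beams_nz h i)) \<and> sum (\<lambda>l. (cmod (h l))\<^sup>2) S > \<alpha> / real Nt"
        using A top_sum_gt[OF fB(1), of "min NRF (card (beams_nz h i))"] by simp
      show ?thesis using A 1 2 3 by blast
    qed
  next
    assume A: "i \<in> {1..Nt} \<and> h i \<noteq> 0 \<and>
    (\<exists>B\<in>Pow {1..i}. (\<forall>l\<in>{1..i}. h l \<noteq> 0 \<longleftrightarrow> l \<in> B) \<and>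
       (\<exists>S\<in>Pow B. card S = min NRF (card B) \<and> sum (\<lambda>l. (cmod (h l))\<^sup>2) S > \<alpha> / real Nt))"
    then obtain B where B: "B \<in> Pow {1..i}" "\<forall>l\<in>{1..i}. h l \<noteq> 0 \<longleftrightarrow> l \<in> B"
      "\<exists>S\<in>Pow B. card S = min NRF (card B) \<and> sum (\<lambda>l. (cmod (h l))\<^sup>2) S > \<alpha> / real Nt" by blast
    have "B = beams_nz h i" using eq B(1,2) by blast
    then show "i \<in> {1..Nt} \<and> h i \<noteq> 0 \<and> top_sum (min NRF (card (beams_nz h i))) (\<lambda>l. (cmod (h l))\<^sup>2) (beams_nz h i) > \<alpha> / real Nt"
      using A B(3) top_sum_gt[OF fB(1), of "min NRF (card (beams_nz h i))"] by simp
  qed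
qed

lemma itsu_stop_le: "itsu_stop NRF \<alpha> Nt h i \<Longrightarrow> i \<in> {1..Nt}"
  unfolding itsu_stop_def by auto

lemma itsu_length_alt:
  "itsu_length NRF \<alpha> Nt h = (if \<exists>i\<in>{1..Nt}. itsu_stop NRF \<alpha> Nt h i
     then (LEAST i. itsu_stop NRF \<alpha> Nt h i) else Nt)"
  unfolding itsu_length_def using itsu_stop_le by metis

lemma pred_ne0:
  fixes f :: "'a \<Rightarrow> complex"
  assumes "f \<in> borel_measurable M"
  shows "Measurable.pred M (\<lambda>x. f x \<noteq> 0)"
proof -
  have "f -` {0} \<inter> space M \<in> sets M" by (rule measurable_sets[OF assms]) simp
  hence "{x \<in> space M. f x = 0} \<in> sets M" by (simp add: Int_def Collect_conj_eq[symmetric] conj_commute vimage_def)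
  moreover have "{x \<in> space M. f x \<noteq> 0} = space M - {x \<in> space M. f x = 0}" by auto
  ultimately have "{x \<in> space M. f x \<noteq> 0} \<in> sets M" using sets.Diff[OF sets.top] by metis
  thus ?thesis unfolding pred_def .
qed

lemma itsu_length_measurable:
  assumes H: "\<And>i. i \<in> {1..Nt} \<Longrightarrow> (\<lambda>x. H x i) \<in> borel_measurable M"
  shows "(\<lambda>x. itsu_length NRF \<alpha> Nt (H x)) \<in> measurable M (count_space UNIV)"
proof -
  have P: "Measurable.pred M (\<lambda>x. itsu_stop NRF \<alpha> Nt (H x) i)" for i
  proof (cases "i \<in> {1..Nt}")
    case False
    hence "(\<lambda>x. itsu_stop NRF \<alpha> Nt (H x) i) = (\<lambda>x. False)" using itsu_stop_le by blast
    thus ?thesis by simp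
  next
    case True
    have Hl: "(\<lambda>x. H x l) \<in> borel_measurable M" if "l \<in> {1..i}" for l
      using H that True by auto
    have ne: "Measurable.pred M (\<lambda>x. H x l \<noteq> 0)" if "l \<in> {1..i}" for l
      by (rule pred_ne0[OF Hl[OF that]])
    have sm: "Measurable.pred M (\<lambda>x. \<alpha> / real Nt < sum (\<lambda>l. (cmod (H x l))\<^sup>2) S)" if "S \<subseteq> {1..i}" for S
    proof -
      have "(\<lambda>x. sum (\<lambda>l. (cmod (H x l))\<^sup>2) S) \<in> borel_measurable M"
      proof (rule borel_measurable_sum)
        fix l assume "l \<in> S"
        then have [measurable]: "(\<lambda>x. H x l) \<in> borel_measurable M" using Hl that by auto
        show "(\<lambda>x. (cmod (H x l))\<^sup>2) \<in> borel_measurable M" by measurable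
      qed
      then show ?thesis unfolding pred_def by (rule borel_measurable_less[OF borel_measurable_const])
    qed
    have inner: "Measurable.pred M (\<lambda>x. (\<forall>l\<in>{1..i}. H x l \<noteq> 0 \<longleftrightarrow> l \<in> B) \<and>
       (\<exists>S\<in>Pow B. card S = min NRF (card B) \<and> sum (\<lambda>l. (cmod (H x l))\<^sup>2) S > \<alpha> / real Nt))"
      if B: "B \<in> Pow {1..i}" for B
    proof (rule pred_intros_logic(3))
      show "Measurable.pred M (\<lambda>x. \<forall>l\<in>{1..i}. H x l \<noteq> 0 \<longleftrightarrow> l \<in> B)"
        apply (rule pred_intros_finite(3))
         apply simp
        apply (rule pred_intros_logic(6)[OF ne measurable_const])
         apply assumption
        apply simp
        done
      show "Measurable.pred M (\<lambda>x. \<exists>S\<in>Pow B. card S = min NRF (card B) \<and> sum (\<lambda>l. (cmod (H x l))\<^sup>2) S > \<alpha> / real Nt)"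
        apply (rule pred_intros_finite(4))
         apply (rule finite_Pow_iff[THEN iffD2])
         using B apply (auto intro: finite_subset)[1]
        apply (rule pred_intros_conj1')
        apply (rule sm)
        using B apply auto
        done
    qed
    have i1: "i \<in> {1..i}" using True by auto
    show ?thesis unfolding itsu_stop_alt
      apply (rule pred_intros_conj1')
      apply (rule pred_intros_logic(3)[OF ne[OF i1]])
      apply (rule pred_intros_finite(4))
       apply simp
      apply (rule inner)
      apply assumption
      done
  qed
  have Q: "Measurable.pred M (\<lambda>x. \<exists>i\<in>{1..Nt}. itsu_stop NRF \<alpha> Nt (H x) i)"
    by (rule pred_intros_finite(4)) (simp_all add: P)
  show ?thesis unfolding itsu_length_alt
    by (rule measurable_If[OF measurable_Least[OF P] measurable_const Q[unfolded pred_def]]) simp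
qed

lemma cgauss_dens_eq:
  assumes s: "s2 > 0"
  shows "exp (- (cmod z)\<^sup>2 / s2) / (pi * s2) =
    (\<Prod>b\<in>Basis. normal_density 0 (sqrt (s2/2)) (z \<bullet> b))"
proof -
  have B: "(Basis :: complex set) = {1, \<i>}" by (simp add: Basis_complex_def)
  have n2: "(cmod z)\<^sup>2 = (Re z)\<^sup>2 + (Im z)\<^sup>2" by (simp add: cmod_def)
  have sq: "(sqrt (s2/2))\<^sup>2 = s2/2" using s by simp
  have nd: "normal_density 0 (sqrt (s2/2)) x = exp (- x\<^sup>2 / s2) / sqrt (pi * s2)" for x
    unfolding normal_density_def sq using s by (simp add: field_simps)
  have "(\<Prod>b\<in>Basis. normal_density 0 (sqrt (s2/2)) (z \<bullet> b)) =
     normal_density 0 (sqrt (s2/2)) (Re z) * normal_density 0 (sqrt (s2/2)) (Im z)"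
    unfolding B by (simp add: complex_inner_1_right complex_inner_i_right)
  also have "\<dots> = exp (- (Re z)\<^sup>2 / s2) * exp (- (Im z)\<^sup>2 / s2) / (sqrt (pi * s2) * sqrt (pi * s2))"
    unfolding nd by simp
  also have "\<dots> = exp (- (cmod z)\<^sup>2 / s2) / (pi * s2)"
    using s unfolding n2 by (simp add: exp_add[symmetric] add_divide_distrib diff_divide_distrib)
  finally show ?thesis by simp
qed

lemma nn_integral_normal_density: "\<sigma> > 0 \<Longrightarrow> (\<integral>\<^sup>+x. ennreal (normal_density \<mu> \<sigma> x) \<partial>lborel) = 1"
  by (subst nn_integral_eq_integral) auto

lemma cgauss_total:
  assumes s: "s2 > 0"
  shows "(\<integral>\<^sup>+z. ennreal (exp (- (cmod z)\<^sup>2 / s2) / (pi * s2)) \<partial>lborel) = 1"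
proof -
  have "(\<integral>\<^sup>+z. ennreal (exp (- (cmod z)\<^sup>2 / s2) / (pi * s2)) \<partial>lborel) =
     (\<integral>\<^sup>+z. (\<Prod>b\<in>Basis. ennreal (normal_density 0 (sqrt (s2/2)) ((z::complex) \<bullet> b))) \<partial>lborel)"
    using s by (subst cgauss_dens_eq[OF s]) (simp add: prod_ennreal)
  also have "\<dots> = (\<Prod>b\<in>(Basis::complex set). (\<integral>\<^sup>+x. ennreal (normal_density 0 (sqrt (s2/2)) x) \<partial>lborel))"
    by (rule nn_integral_lborel_prod) auto
  also have "\<dots> = 1" using s by (simp add: nn_integral_normal_density)
  finally show ?thesis .
qed

lemma prob_space_cgauss:
  assumes s: "s2 > 0"
  shows "prob_space (cgauss s2)"
proof
  show "emeasure (cgauss s2) (space (cgauss s2)) = 1"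
    using cgauss_total[OF s] unfolding cgauss_def by (simp add: emeasure_density)
qed

lemma sets_cgauss[simp]: "sets (cgauss s2) = sets borel"
  unfolding cgauss_def by simp

lemma cgauss_small:
  assumes s: "s2 > 0" and t: "t \<ge> 0"
  shows "measure (cgauss s2) {z. (cmod z)\<^sup>2 \<le> t} \<le> t / s2"
proof -
  have A: "{z. (cmod z)\<^sup>2 \<le> t} = cball 0 (sqrt t)"
  proof (intro set_eqI iffI)
    fix z assume "z \<in> {z. (cmod z)\<^sup>2 \<le> t}"
    thus "z \<in> cball 0 (sqrt t)" by (auto simp: dist_norm real_le_rsqrt)
  next
    fix z :: complex assume "z \<in> cball 0 (sqrt t)"
    hence "cmod z \<le> sqrt t" by (simp add: dist_norm)
    hence "(cmod z)\<^sup>2 \<le> (sqrt t)\<^sup>2" by (intro power_mono) auto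
    thus "z \<in> {z. (cmod z)\<^sup>2 \<le> t}" using t by simp
  qed
  have "emeasure (cgauss s2) (cball 0 (sqrt t)) =
      (\<integral>\<^sup>+z. ennreal (exp (- (cmod z)\<^sup>2 / s2) / (pi * s2)) * indicator (cball 0 (sqrt t)) z \<partial>lborel)"
    unfolding cgauss_def by (subst emeasure_density) auto
  also have "\<dots> \<le> (\<integral>\<^sup>+z. ennreal (1 / (pi * s2)) * indicator (cball 0 (sqrt t)) (z::complex) \<partial>lborel)"
  proof (rule nn_integral_mono)
    fix z :: complex
    have "exp (- (cmod z)\<^sup>2 / s2) \<le> 1" using s by simp
    hence "exp (- (cmod z)\<^sup>2 / s2) / (pi * s2) \<le> 1 / (pi * s2)"
      using s by (intro divide_right_mono) auto
    thus "ennreal (exp (- (cmod z)\<^sup>2 / s2) / (pi * s2)) * indicator (cball 0 (sqrt t)) z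
      \<le> ennreal (1 / (pi * s2)) * indicator (cball 0 (sqrt t)) z"
      by (intro mult_right_mono ennreal_leI) auto
  qed
  also have "\<dots> = ennreal (1 / (pi * s2)) * emeasure lborel (cball (0::complex) (sqrt t))"
    by (subst nn_integral_cmult_indicator) auto
  also have "\<dots> = ennreal (1 / (pi * s2)) * ennreal (pi * t)"
    using t by (simp add: emeasure_cball unit_ball_vol_2)
  also have "\<dots> = ennreal (t / s2)"
    using s t by (simp add: ennreal_mult[symmetric])
  finally have "emeasure (cgauss s2) (cball 0 (sqrt t)) \<le> ennreal (t / s2)" .
  then show ?thesis unfolding A measure_def using s t by (simp add: enn2real_leI)
qed

lemma Min_as_card:
  assumes I: "I \<subseteq> {1..N}" "I \<noteq> {}"
  shows "Min I = card {k\<in>{1..N}. I \<subseteq> {k..N}}"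
proof -
  have fI: "finite I" using I(1) finite_subset by blast
  have m1: "Min I \<in> I" using fI I(2) by simp
  have "{k\<in>{1..N}. I \<subseteq> {k..N}} = {1..Min I}"
  proof (intro set_eqI iffI)
    fix k assume "k \<in> {k\<in>{1..N}. I \<subseteq> {k..N}}"
    hence "k \<ge> 1" "\<forall>x\<in>I. k \<le> x" by auto
    thus "k \<in> {1..Min I}" using fI I(2) by auto
  next
    fix k assume k: "k \<in> {1..Min I}"
    have "Min I \<le> N" using m1 I(1) by auto
    moreover have "I \<subseteq> {k..N}"
    proof
      fix x assume x: "x \<in> I"
      have "Min I \<le> x" using Min_le[OF fI x] .
      thus "x \<in> {k..N}" using k x I(1) by auto
    qed
    ultimately show "k \<in> {k\<in>{1..N}. I \<subseteq> {k..N}}" using k by auto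
  qed
  thus ?thesis by simp
qed

lemma sum_Min_subsets:
  fixes N L :: nat
  assumes L: "L \<ge> 1"
  shows "(\<Sum>I\<in>{I. I \<subseteq> {1..N} \<and> card I = L}. Min I) = (N+1) choose (L+1)"
proof -
  let ?S = "{I. I \<subseteq> {1..N} \<and> card I = L}"
  have fin: "finite ?S" by (rule finite_subset[of _ "Pow {1..N}"]) auto
  have "(\<Sum>I\<in>?S. Min I) = (\<Sum>I\<in>?S. \<Sum>k\<in>{1..N}. if I \<subseteq> {k..N} then 1 else 0)"
  proof (rule sum.cong[OF refl])
    fix I assume "I \<in> ?S"
    hence "I \<subseteq> {1..N}" "I \<noteq> {}" using L by auto
    hence "Min I = card {k\<in>{1..N}. I \<subseteq> {k..N}}" by (rule Min_as_card)
    also have "\<dots> = (\<Sum>k\<in>{1..N}. if I \<subseteq> {k..N} then 1 else 0)"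
      by (simp add: sum.inter_filter[symmetric])
    finally show "Min I = (\<Sum>k\<in>{1..N}. if I \<subseteq> {k..N} then 1 else 0)" .
  qed
  also have "\<dots> = (\<Sum>k\<in>{1..N}. \<Sum>I\<in>?S. if I \<subseteq> {k..N} then 1 else 0)"
    by (rule sum.swap)
  also have "\<dots> = (\<Sum>k\<in>{1..N}. (N + 1 - k) choose L)"
  proof (rule sum.cong[OF refl])
    fix k assume k: "k \<in> {1..N}"
    have "(\<Sum>I\<in>?S. if I \<subseteq> {k..N} then 1 else 0) = card {I\<in>?S. I \<subseteq> {k..N}}"
      using fin by (simp add: sum.inter_filter[symmetric])
    also have "{I\<in>?S. I \<subseteq> {k..N}} = {I. I \<subseteq> {k..N} \<and> card I = L}" using k by auto
    also have "card \<dots> = card {k..N} choose L" by (rule n_subsets) simp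
    also have "\<dots> = (N + 1 - k) choose L" by simp
    finally show "(\<Sum>I\<in>?S. if I \<subseteq> {k..N} then 1 else 0) = (N + 1 - k) choose L" .
  qed
  also have "\<dots> = (\<Sum>i\<in>{1..N}. (N + 1 - (N + 1 - i)) choose L)"
    by (rule sum.atLeastAtMost_rev)
  also have "\<dots> = (\<Sum>i\<in>{1..N}. i choose L)"
    by (rule sum.cong[OF refl]) auto
  also have "\<dots> = (\<Sum>i\<le>N. i choose L)"
  proof -
    have "{..N} = insert 0 {1..N}" by auto
    thus ?thesis using L by simp
  qed
  also have "\<dots> = (N+1) choose (L+1)" by (simp add: sum_choose_upper)
  finally show ?thesis .
qed

lemma card_subsets: "card {I. I \<subseteq> {1..N} \<and> card I = L} = N choose L"
  by (subst n_subsets) auto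

lemma avg_Min_subsets:
  fixes N L :: nat
  assumes L: "L \<ge> 1" and NL: "L \<le> N"
  shows "(\<Sum>I\<in>{I. I \<subseteq> {1..N} \<and> card I = L}. real (Min I)) / real (N choose L) = (real N + 1) / (real L + 1)"
proof -
  have "(\<Sum>I\<in>{I. I \<subseteq> {1..N} \<and> card I = L}. real (Min I)) = real ((N+1) choose (L+1))"
    using sum_Min_subsets[OF L, of N] by (metis of_nat_sum)
  also have "real ((N+1) choose (L+1)) * (real L + 1) = (real N + 1) * real (N choose L)"
  proof -
    have "(Suc N choose Suc L) * Suc L = Suc N * (N choose L)"
      by (rule Suc_times_binomial_eq[symmetric])
    hence "real ((Suc N choose Suc L) * Suc L) = real (Suc N * (N choose L))" by (simp only:)
    thus ?thesis by (simp only: of_nat_mult of_nat_Suc Suc_eq_plus1) (simp add: algebra_simps)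
  qed
  moreover have "real (N choose L) > 0" using NL by simp
  ultimately show ?thesis by (simp add: field_simps)
qed

lemma T_le_Nt: "itsu_length NRF \<alpha> Nt h \<le> Nt"
proof (cases "\<exists>i. itsu_stop NRF \<alpha> Nt h i")
  case True
  then obtain i where i: "itsu_stop NRF \<alpha> Nt h i" by blast
  have "(LEAST i. itsu_stop NRF \<alpha> Nt h i) \<le> i" by (rule Least_le[of "itsu_stop NRF \<alpha> Nt h", OF i])
  also have "i \<le> Nt" using itsu_stop_le[OF i] by simp
  finally show ?thesis unfolding itsu_length_def if_P[OF True] .
qed (simp add: itsu_length_def)

lemma T_lower:
  assumes I: "I \<subseteq> {1..Nt}" "I \<noteq> {}"
  shows "Min I \<le> itsu_length NRF \<alpha> Nt (channel_of (I, g))"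
proof -
  have fI: "finite I" using I(1) finite_subset by blast
  show ?thesis
  proof (cases "\<exists>i. itsu_stop NRF \<alpha> Nt (channel_of (I, g)) i")
    case True
    let ?k = "LEAST i. itsu_stop NRF \<alpha> Nt (channel_of (I, g)) i"
    have "itsu_stop NRF \<alpha> Nt (channel_of (I, g)) ?k" using True by (rule LeastI_ex)
    hence "channel_of (I, g) ?k \<noteq> 0" unfolding itsu_stop_def by simp
    hence "?k \<in> I" unfolding channel_of_def by (auto split: if_splits)
    hence "Min I \<le> ?k" using fI by simp
    thus ?thesis unfolding itsu_length_def if_P[OF True] .
  next
    case False
    have "Min I \<in> I" using fI I(2) by simp
    hence "Min I \<le> Nt" using I(1) by auto
    thus ?thesis unfolding itsu_length_def if_not_P[OF False] .
  qed
qed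

lemma T_upper:
  assumes I: "I \<subseteq> {1..Nt}" "I \<noteq> {}" and NRF: "NRF \<ge> 1" and a: "\<alpha> > 0"
    and big: "\<alpha> / real Nt < (cmod (g (Min I)))\<^sup>2"
  shows "itsu_length NRF \<alpha> Nt (channel_of (I, g)) \<le> Min I"
proof -
  let ?h = "channel_of (I, g)" and ?m = "Min I"
  have fI: "finite I" using I(1) finite_subset by blast
  have mI: "?m \<in> I" using fI I(2) by simp
  have hm: "?h ?m = g ?m" using mI by (simp add: channel_of_def)
  have "\<alpha> / real Nt \<ge> 0" using a by simp
  hence gm: "g ?m \<noteq> 0" using big by auto
  have B: "beams_nz ?h ?m = {?m}"
  proof (intro set_eqI iffI)
    fix l assume "l \<in> beams_nz ?h ?m"
    hence l: "l \<in> {1..?m}" "?h l \<noteq> 0" unfolding beams_nz_def by auto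
    hence "l \<in> I" unfolding channel_of_def by (auto split: if_splits)
    hence "?m \<le> l" using fI by simp
    thus "l \<in> {?m}" using l by auto
  next
    fix l assume "l \<in> {?m}"
    thus "l \<in> beams_nz ?h ?m" using hm gm mI I(1) unfolding beams_nz_def by auto
  qed
  have mN: "?m \<in> {1..Nt}" using mI I(1) by auto
  have "top_sum (min NRF (card (beams_nz ?h ?m))) (\<lambda>l. (cmod (?h l))\<^sup>2) (beams_nz ?h ?m) > \<alpha> / real Nt"
  proof -
    have "min NRF (card {?m}) = 1" using NRF by simp
    moreover have "\<exists>S\<in>Pow {?m}. card S = 1 \<and> sum (\<lambda>l. (cmod (?h l))\<^sup>2) S > \<alpha> / real Nt"
      using big hm by (intro bexI[of _ "{?m}"]) auto
    ultimately show ?thesis unfolding B using top_sum_gt[of "{?m}" 1] by simp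
  qed
  hence stop: "itsu_stop NRF \<alpha> Nt ?h ?m" unfolding itsu_stop_def using mN hm gm by simp
  hence "(LEAST i. itsu_stop NRF \<alpha> Nt ?h i) \<le> ?m" by (rule Least_le[of "itsu_stop NRF \<alpha> Nt ?h"])
  moreover have "\<exists>i. itsu_stop NRF \<alpha> Nt ?h i" using stop by blast
  ultimately show ?thesis unfolding itsu_length_def by simp
qed

lemma channel_fixed_measurable:
  "i \<in> {1..Nt} \<Longrightarrow> (\<lambda>g. channel_of (I, g) i) \<in> borel_measurable (PiM {1..Nt} (\<lambda>_. cgauss s))"
proof -
  assume i: "i \<in> {1..Nt}"
  show ?thesis
  proof (cases "i \<in> I")
    case True
    have "(\<lambda>g. g i) \<in> measurable (PiM {1..Nt} (\<lambda>_. cgauss s)) (cgauss s)"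
      by (rule measurable_component_singleton[OF i])
    moreover have "measurable (PiM {1..Nt} (\<lambda>_. cgauss s)) (cgauss s) = borel_measurable (PiM {1..Nt} (\<lambda>_. cgauss s))"
      by (rule measurable_cong_sets) (rule refl, rule sets_cgauss)
    ultimately have "(\<lambda>g. g i) \<in> borel_measurable (PiM {1..Nt} (\<lambda>_. cgauss s))"
      by simp
    thus ?thesis using True by (simp add: channel_of_def)
  qed (simp add: channel_of_def)
qed

lemma per_I:
  fixes L NRF Nt :: nat and \<alpha> :: real
  assumes L: "L \<ge> 1" and a: "\<alpha> > 0" and NRF: "NRF \<ge> 1"
    and I: "I \<subseteq> {1..Nt}" "I \<noteq> {}"
  defines "G \<equiv> PiM {1..Nt} (\<lambda>_. cgauss (1 / real L))"
  shows "real (Min I) \<le> (\<integral>g. real (itsu_length NRF \<alpha> Nt (channel_of (I, g))) \<partial>G)"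
    and "(\<integral>g. real (itsu_length NRF \<alpha> Nt (channel_of (I, g))) \<partial>G) \<le> real (Min I) + \<alpha> * real L"
proof -
  have sL: "1 / real L > 0" using L by simp
  interpret PP: product_prob_space "\<lambda>_. cgauss (1 / real L)" "{1..Nt}"
    by (rule product_prob_spaceI) (simp add: prob_space_cgauss[OF sL])
  interpret G: prob_space G unfolding G_def by (rule PP.P.prob_space_axioms)
  let ?T = "\<lambda>g. real (itsu_length NRF \<alpha> Nt (channel_of (I, g)))"
  have Tm: "?T \<in> borel_measurable G"
  proof -
    have "(\<lambda>g. itsu_length NRF \<alpha> Nt (channel_of (I, g))) \<in> measurable G (count_space UNIV)"
      unfolding G_def by (rule itsu_length_measurable) (rule channel_fixed_measurable)
    thus ?thesis by (rule measurable_compose) simp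
  qed
  have Tint: "integrable G ?T"
    by (rule G.integrable_const_bound[where B="real Nt"]) (auto simp: T_le_Nt Tm)
  show "real (Min I) \<le> (\<integral>g. ?T g \<partial>G)"
  proof -
    have "(\<integral>g. real (Min I) \<partial>G) \<le> (\<integral>g. ?T g \<partial>G)"
      by (rule integral_mono[OF _ Tint]) (auto simp: T_lower[OF I])
    thus ?thesis by (simp add: G.prob_space)
  qed
  have fI: "finite I" using I(1) finite_subset by blast
  let ?m = "Min I"
  have "?m \<in> I" using fI I(2) by simp
  hence mN: "?m \<in> {1..Nt}" using I(1) by auto
  hence Nt1: "Nt \<ge> 1" by simp
  let ?t = "\<alpha> / real Nt"
  let ?D = "{z::complex. (cmod z)\<^sup>2 \<le> ?t}"
  let ?A = "{g \<in> space G. g ?m \<in> ?D}"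
  have Dm: "?D \<in> sets borel"
  proof -
    have "closed ?D" by (intro closed_Collect_le continuous_intros)
    thus ?thesis by (rule borel_closed)
  qed
  have muA: "measure G ?A = measure (cgauss (1 / real L)) ?D"
    unfolding G_def using PP.emeasure_PiM_Collect_single[OF mN, of ?D] Dm
    by (simp add: measure_def)
  have Am: "?A \<in> sets G" unfolding G_def using Dm mN by (intro sets_Collect_single') (auto simp: cgauss_def)
  have "measure (cgauss (1 / real L)) ?D \<le> ?t / (1 / real L)"
    by (rule cgauss_small[OF sL]) (use a in simp)
  hence muA2: "real Nt * measure G ?A \<le> \<alpha> * real L"
    using Nt1 muA by (simp add: field_simps)
  have "(\<integral>g. ?T g \<partial>G) \<le> (\<integral>g. real ?m + real Nt * indicator ?A g \<partial>G)"
  proof (rule integral_mono[OF Tint])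
    show "integrable G (\<lambda>g. real ?m + real Nt * indicator ?A g)"
      using Am by (intro Bochner_Integration.integrable_add integrable_mult_right integrable_indicator) (auto simp: less_top[symmetric] G.emeasure_finite)
    fix g assume g: "g \<in> space G"
    show "?T g \<le> real ?m + real Nt * indicator ?A g"
    proof (cases "g \<in> ?A")
      case True
      have "?T g \<le> real Nt" by (simp add: T_le_Nt)
      thus ?thesis using True by simp
    next
      case False
      hence "?t < (cmod (g ?m))\<^sup>2" using g by auto
      hence "itsu_length NRF \<alpha> Nt (channel_of (I, g)) \<le> ?m" by (rule T_upper[OF I NRF a])
      thus ?thesis using False by simp
    qed
  qed
  also have "\<dots> = real ?m + real Nt * measure G ?A"
  proof -
    have iA': "integrable G (indicator ?A :: _ \<Rightarrow> real)"
    proof (rule G.integrable_const_bound[where B=1])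
      show "indicator ?A \<in> borel_measurable G" using Am by (rule borel_measurable_indicator)
    qed (simp split: split_indicator)
    have "(\<integral>g. real ?m + real Nt * indicator ?A g \<partial>G) = (\<integral>g. real ?m \<partial>G) + (\<integral>g. real Nt * indicator ?A g \<partial>G)"
      by (rule Bochner_Integration.integral_add) (simp, rule integrable_mult_right[OF iA'])
    also have "\<dots> = real ?m + real Nt * measure G (?A \<inter> space G)"
      by (simp add: G.prob_space)
    also have "?A \<inter> space G = ?A" by auto
    finally show ?thesis .
  qed
  also have "\<dots> \<le> real ?m + \<alpha> * real L" using muA2 by simp
  finally show "(\<integral>g. ?T g \<partial>G) \<le> real ?m + \<alpha> * real L" .
qed

lemma avg_bounds:
  fixes L NRF Nt :: nat and \<alpha> :: real
  assumes L: "L \<ge> 1" and a: "\<alpha> > 0" and NRF: "NRF \<ge> 1" and NL: "L \<le> Nt"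
  shows "(real Nt + 1) / (real L + 1) \<le> avg_itsu_length L NRF \<alpha> Nt"
    and "avg_itsu_length L NRF \<alpha> Nt \<le> (real Nt + 1) / (real L + 1) + \<alpha> * real L"
proof -
  define SS where "SS = {I. I \<subseteq> {1..Nt} \<and> card I = L}"
  define G where "G = PiM {1..Nt} (\<lambda>_. cgauss (1 / real L))"
  define p where "p = pmf_of_set SS"
  have fin: "finite SS" unfolding SS_def by (rule finite_subset[of _ "Pow {1..Nt}"]) auto
  have ne: "SS \<noteq> {}"
  proof -
    obtain I where "I \<subseteq> {1..Nt}" "card I = L" using obtain_subset_with_card_n[of L "{1..Nt}"] NL by auto
    thus ?thesis unfolding SS_def by auto
  qed
  have sL: "1 / real L > 0" using L by simp
  interpret PP: product_prob_space "\<lambda>_. cgauss (1 / real L)" "{1..Nt}"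
    by (rule product_prob_spaceI) (simp add: prob_space_cgauss[OF sL])
  interpret G: prob_space G unfolding G_def by (rule PP.P.prob_space_axioms)
  interpret PS: pair_prob_space "measure_pmf p" G ..
  have CS: "channel_space L Nt = measure_pmf p \<Otimes>\<^sub>M G"
    unfolding channel_space_def p_def SS_def G_def ..
  let ?f = "\<lambda>\<omega>. real (itsu_length NRF \<alpha> Nt (channel_of \<omega>))"
  have fm: "?f \<in> borel_measurable (measure_pmf p \<Otimes>\<^sub>M G)"
  proof -
    have "(\<lambda>\<omega>. itsu_length NRF \<alpha> Nt (channel_of \<omega>)) \<in> measurable (measure_pmf p \<Otimes>\<^sub>M G) (count_space UNIV)"
    proof (rule itsu_length_measurable)
      fix i :: nat assume i: "i \<in> {1..Nt}"
      have c: "(\<lambda>g. g i) \<in> borel_measurable G"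
      proof -
        have "(\<lambda>g. g i) \<in> measurable G (cgauss (1 / real L))"
          unfolding G_def by (rule measurable_component_singleton[OF i])
        moreover have "measurable G (cgauss (1 / real L)) = borel_measurable G"
          by (rule measurable_cong_sets) (rule refl, rule sets_cgauss)
        ultimately show ?thesis by simp
      qed
      have s: "(\<lambda>\<omega>. snd \<omega> i) \<in> borel_measurable (measure_pmf p \<Otimes>\<^sub>M G)"
        by (rule measurable_compose[OF measurable_snd c])
      have P: "{\<omega> \<in> space (measure_pmf p \<Otimes>\<^sub>M G). i \<in> fst \<omega>} \<in> sets (measure_pmf p \<Otimes>\<^sub>M G)"
      proof -
        have "fst -` {I. i \<in> I} \<inter> space (measure_pmf p \<Otimes>\<^sub>M G) \<in> sets (measure_pmf p \<Otimes>\<^sub>M G)"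
          by (rule measurable_sets[OF measurable_fst]) simp
        moreover have "fst -` {I. i \<in> I} \<inter> space (measure_pmf p \<Otimes>\<^sub>M G) = {\<omega> \<in> space (measure_pmf p \<Otimes>\<^sub>M G). i \<in> fst \<omega>}"
          by auto
        ultimately show ?thesis by simp
      qed
      have "(\<lambda>\<omega>. if i \<in> fst \<omega> then snd \<omega> i else 0) \<in> borel_measurable (measure_pmf p \<Otimes>\<^sub>M G)"
        by (rule measurable_If[OF s measurable_const P]) simp
      thus "(\<lambda>\<omega>. channel_of \<omega> i) \<in> borel_measurable (measure_pmf p \<Otimes>\<^sub>M G)"
        unfolding channel_of_def .
    qed
    thus ?thesis by (rule measurable_compose) simp
  qed
  have fint: "integrable (measure_pmf p \<Otimes>\<^sub>M G) ?f"
    by (rule PS.P.integrable_const_bound[where B="real Nt"]) (auto simp: T_le_Nt fm)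
  have avg: "avg_itsu_length L NRF \<alpha> Nt = (\<Sum>I\<in>SS. (\<integral>g. ?f (I, g) \<partial>G)) / real (card SS)"
  proof -
    have "avg_itsu_length L NRF \<alpha> Nt = integral\<^sup>L (measure_pmf p \<Otimes>\<^sub>M G) ?f"
      unfolding avg_itsu_length_def CS ..
    also have "\<dots> = (\<integral>I. (\<integral>g. ?f (I, g) \<partial>G) \<partial>measure_pmf p)"
      by (rule PS.integral_fst'[OF fint, symmetric])
    also have "\<dots> = (\<Sum>I\<in>SS. (\<integral>g. ?f (I, g) \<partial>G)) / real (card SS)"
      unfolding p_def by (rule integral_pmf_of_set[OF ne fin])
    finally show ?thesis .
  qed
  have cSS: "real (card SS) > 0" using fin ne by (simp add: card_gt_0_iff)
  have meanMin: "(\<Sum>I\<in>SS. real (Min I)) / real (card SS) = (real Nt + 1) / (real L + 1)"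
    unfolding SS_def card_subsets by (rule avg_Min_subsets[OF L NL])
  have IS: "I \<subseteq> {1..Nt}" "I \<noteq> {}" if "I \<in> SS" for I
    using that L unfolding SS_def by auto
  have lo: "(\<Sum>I\<in>SS. real (Min I)) \<le> (\<Sum>I\<in>SS. (\<integral>g. ?f (I, g) \<partial>G))"
    by (rule sum_mono) (unfold G_def, rule per_I(1)[OF L a NRF IS])
  have hi: "(\<Sum>I\<in>SS. (\<integral>g. ?f (I, g) \<partial>G)) \<le> (\<Sum>I\<in>SS. real (Min I) + \<alpha> * real L)"
    by (rule sum_mono) (unfold G_def, rule per_I(2)[OF L a NRF IS])
  have hi2: "(\<Sum>I\<in>SS. real (Min I) + \<alpha> * real L) = (\<Sum>I\<in>SS. real (Min I)) + real (card SS) * (\<alpha> * real L)"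
    by (simp add: sum.distrib)
  show "(real Nt + 1) / (real L + 1) \<le> avg_itsu_length L NRF \<alpha> Nt"
    unfolding avg meanMin[symmetric] using lo cSS by (intro divide_right_mono) auto
  have "avg_itsu_length L NRF \<alpha> Nt \<le> ((\<Sum>I\<in>SS. real (Min I)) + real (card SS) * (\<alpha> * real L)) / real (card SS)"
    unfolding avg using hi hi2 cSS by (intro divide_right_mono) auto
  also have "\<dots> = (\<Sum>I\<in>SS. real (Min I)) / real (card SS) + \<alpha> * real L"
    using cSS by (simp add: add_divide_distrib)
  finally show "avg_itsu_length L NRF \<alpha> Nt \<le> (real Nt + 1) / (real L + 1) + \<alpha> * real L"
    unfolding meanMin .
qed

theorem corollary1:
  fixes L NRF :: nat and \<alpha> :: real
  assumes "L \<ge> 1" and "\<alpha> > 0" and "NRF \<ge> 1"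
  shows "(\<lambda>Nt. avg_itsu_length L NRF \<alpha> Nt - real Nt / real (L + 1)) \<in> O(\<lambda>_. 1)"
proof (rule bigoI[where c = "1 + \<alpha> * real L"])
  show "\<forall>\<^sub>F Nt in at_top. norm (avg_itsu_length L NRF \<alpha> Nt - real Nt / real (L + 1)) \<le> (1 + \<alpha> * real L) * norm (1::real)"
  proof (rule eventually_mono[OF eventually_ge_at_top[of L]])
    fix Nt assume NL: "L \<le> Nt"
    note b1 = avg_bounds(1)[OF assms NL] and b2 = avg_bounds(2)[OF assms NL]
    have q: "(real Nt + 1) / (real L + 1) = real Nt / real (L + 1) + 1 / (real L + 1)"
      by (simp add: add_divide_distrib)
    have q2: "0 \<le> 1 / (real L + 1)" "1 / (real L + 1) \<le> 1" by (auto simp: field_simps)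
    have "0 \<le> \<alpha> * real L" using assms by simp
    show "norm (avg_itsu_length L NRF \<alpha> Nt - real Nt / real (L + 1)) \<le> (1 + \<alpha> * real L) * norm (1::real)"
    proof -
      have r: "real (L + 1) = real L + 1" by simp
      show ?thesis unfolding real_norm_def r abs_one mult_1_right abs_le_iff
        using b1 b2 q q2 \<open>0 \<le> \<alpha> * real L\<close> unfolding r by linarith
    qed
  qed
qed

end
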